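(* Let $T=\left[\begin{smallmatrix} R & M\\ N & S\end{smallmatrix}\right]$ and $T'=\left[\begin{smallmatrix} R' & M'\\ N' & S'\end{smallmatrix}\right]$ be Morita context rings such that $R'$ and $S'$ are indecomposable rings and at least one of $M'$, $N'$ is nonzero. Then: (1) $\mathrm{Iso}_0^0(T,T')$ equals the set of all semigraded isomorphisms from $T$ to $T'$; (2) $\mathrm{Iso}_0^1(T,T')$ equals the set of all anti-semigraded isomorphisms from $T$ to $T'$. In particular, $\mathrm{Iso}_g(T,T')\subseteq\mathrm{Iso}_0(T,T')$.
   Context: All rings have an identity $1\neq 0$; a ring is indecomposable if its only central idempotents are $0$ and $1$. A Morita context $(R,S,M,N,f,g)$: rings $R,S$, an $R$-$S$-bimodule $M$, an $S$-$R$-bimodule $N$, bimodule morphisms $f:M\otimes_SN\to R$, $g:N\otimes_RM\to S$, with $[m,n]=f(m\otimes n)$, $(n,m)=g(n\otimes m)$ satisfying $[m,n]m'=m(n,m')$ and $n[m,n']=(n,m)n'$. Its Morita context ring $T=\left[\begin{smallmatrix} R & M\\ N & S\end{smallmatrix}\right]$ consists of formal matrices with entrywise addition and product $\left[\begin{smallmatrix} r & m\\ n & s\end{smallmatrix}\right]\left[\begin{smallmatrix} r' & m'\\ n' & s'\end{smallmatrix}\right]=\left[\begin{smallmatrix} rr'+[m,n'] & rm'+ms'\\ nr'+sn' & (n,m')+ss'\end{smallmatrix}\right]$; similarly for $T'$ (pairings also written $[\,,],(\,,)$). Grading: $T_{-1}=\left[\begin{smallmatrix} 0 & 0\\ N &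 0\end{smallmatrix}\right]$, $T_0=\left[\begin{smallmatrix} R & 0\\ 0 & S\end{smallmatrix}\right]$, $T_1=\left[\begin{smallmatrix} 0 & M\\ 0 & 0\end{smallmatrix}\right]$, $T_i=0$ otherwise (same for $T'$). A ring isomorphism $\phi:T\to T'$ is graded if $\phi(T_i)\subseteq T'_i$ for all $i\in\mathbb Z$, anti-graded if $\phi(T_i)\subseteq T'_{-i}$ for all $i$; $\mathrm{Iso}_g(T,T')$ is the set of all graded and anti-graded isomorphisms. $\phi$ is semigraded if $\phi(T_i)\subseteq T'_i$ for $i\in\{-1,1\}$, and anti-semigraded if $\phi(T_i)\subseteq T'_{-i}$ for $i\in\{-1,1\}$. $\mathrm{Iso}_0(T,T')=\mathrm{Iso}_0^0(T,T')\cup\mathrm{Iso}_0^1(T,T')$, where $\mathrm{Iso}_0^0(T,T')$ is the set of maps $\phi\left(\left[\begin{smallmatrix} r & m\\ n & s\end{smallmatrix}\right]\right)=\left[\begin{smallmatrix}\gamma(r) & \gamma(r)m'_0-m'_0\delta(s)+u(m)\\ n'_0\gamma(r)-\delta(s)n'_0+v(n) & \delta(s)\end{smallmatrix}\right]$ with $\gamma:R\to R'$, $\delta:S\to S'$ ring isomorphisms, $u:M\to M'$, $v:N\to N'$ additive bijections with $u(rms)=\gamma(r)u(m)\delta(s)$, $v(snr)=\delta(s)v(n)\gamma(r)$, and $m'_0\in M'$, $n'_0\in N'$ with $[m'_0,N']=0$, $(N',m'_0)=0$, $[M',n'_0]=0$, $(n'_0,M')=0$, $[u(m),v(n)]=\gamma([m,n])$,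 $(v(n),u(m))=\delta((n,m))$; and $\mathrm{Iso}_0^1(T,T')$ is the set of maps $\psi\left(\left[\begin{smallmatrix} r & m\\ n & s\end{smallmatrix}\right]\right)=\left[\begin{smallmatrix}\sigma(s) & m'_*\rho(r)-\sigma(s)m'_*+\nu(n)\\ \rho(r)n'_*-n'_*\sigma(s)+\mu(m) & \rho(r)\end{smallmatrix}\right]$ with $\rho:R\to S'$, $\sigma:S\to R'$ ring isomorphisms, $\mu:M\to N'$, $\nu:N\to M'$ additive bijections with $\mu(rms)=\rho(r)\mu(m)\sigma(s)$, $\nu(snr)=\sigma(s)\nu(n)\rho(r)$, and $m'_*\in M'$, $n'_*\in N'$ with $[m'_*,N']=0$, $(N',m'_* )=0$, $[M',n'_*]=0$, $(n'_*,M')=0$, $(\mu(m),\nu(n))=\rho([m,n])$, $[\nu(n),\mu(m)]=\sigma((n,m))$. All such maps are ring isomorphisms. *)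

theory Defs
  imports Main
begin

text \<open>The rings R, S are the types 'r, 's (class ring_1,
  which includes 1 \<noteq> 0); the bimodules M, N are the abelian groups 'm, 'n together with
  their scalar actions; pf m n = [m,n] and pg n m = (n,m).\<close>

record ('r, 's, 'm, 'n) morita =
  lM :: "'r \<Rightarrow> 'm \<Rightarrow> 'm"
  rM :: "'m \<Rightarrow> 's \<Rightarrow> 'm"
  lN :: "'s \<Rightarrow> 'n \<Rightarrow> 'n"
  rN :: "'n \<Rightarrow> 'r \<Rightarrow> 'n"
  pf :: "'m \<Rightarrow> 'n \<Rightarrow> 'r"
  pg :: "'n \<Rightarrow> 'm \<Rightarrow> 's"

definition bimodule ::
  "('r::ring_1 \<Rightarrow> 'm::ab_group_add \<Rightarrow> 'm) \<Rightarrow> ('m \<Rightarrow> 's::ring_1 \<Rightarrow> 'm) \<Rightarrow> bool" where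
  "bimodule l r \<longleftrightarrow>
     (\<forall>a m m'. l a (m + m') = l a m + l a m') \<and>
     (\<forall>a b m. l (a + b) m = l a m + l b m) \<and>
     (\<forall>a b m. l (a * b) m = l a (l b m)) \<and>
     (\<forall>m. l 1 m = m) \<and>
     (\<forall>s m m'. r (m + m') s = r m s + r m' s) \<and>
     (\<forall>s t m. r m (s + t) = r m s + r m t) \<and>
     (\<forall>s t m. r m (s * t) = r (r m s) t) \<and>
     (\<forall>m. r m 1 = m) \<and>
     (\<forall>a m s. r (l a m) s = l a (r m s))"

definition morita_context :: "('r::ring_1, 's::ring_1, 'm::ab_group_add, 'n::ab_group_add) morita \<Rightarrow> bool" where
  "morita_context C \<longleftrightarrow>
     bimodule (lM C) (rM C) \<and> bimodule (lN C) (rN C) \<and>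
     \<comment> \<open>f : M \<otimes>_S N \<rightarrow> R is a well-defined R-R-bimodule map\<close>
     (\<forall>m m' n. pf C (m + m') n = pf C m n + pf C m' n) \<and>
     (\<forall>m n n'. pf C m (n + n') = pf C m n + pf C m n') \<and>
     (\<forall>m s n. pf C (rM C m s) n = pf C m (lN C s n)) \<and>
     (\<forall>a m n. pf C (lM C a m) n = a * pf C m n) \<and>
     (\<forall>a m n. pf C m (rN C n a) = pf C m n * a) \<and>
     \<comment> \<open>g : N \<otimes>_R M \<rightarrow> S is a well-defined S-S-bimodule map\<close>
     (\<forall>n n' m. pg C (n + n') m = pg C n m + pg C n' m) \<and>
     (\<forall>n m m'. pg C n (m + m') = pg C n m + pg C n m') \<and>
     (\<forall>n a m. pg C (rN C n a) m = pg C n (lM C a m)) \<and>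
     (\<forall>s n m. pg C (lN C s n) m = s * pg C n m) \<and>
     (\<forall>s n m. pg C n (rM C m s) = pg C n m * s) \<and>
     \<comment> \<open>associativity conditions\<close>
     (\<forall>m n m'. lM C (pf C m n) m' = rM C m (pg C n m')) \<and>
     (\<forall>n m n'. rN C n (pf C m n') = lN C (pg C n m) n')"

text \<open>The Morita context ring T: elements are formal matrices (r, m, n, s) standing for
  [[r, m], [n, s]].\<close>

type_synonym ('r, 's, 'm, 'n) mcr = "'r \<times> 'm \<times> 'n \<times> 's"

definition mc_add :: "('r::ring_1, 's::ring_1, 'm::ab_group_add, 'n::ab_group_add) mcr \<Rightarrow> ('r, 's, 'm, 'n) mcr \<Rightarrow> ('r, 's, 'm, 'n) mcr" where
  "mc_add x y = (case x of (r, m, n, s) \<Rightarrow> case y of (r', m', n', s') \<Rightarrow>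
      (r + r', m + m', n + n', s + s'))"

definition mc_mult :: "('r::ring_1, 's::ring_1, 'm::ab_group_add, 'n::ab_group_add) morita \<Rightarrow>
    ('r, 's, 'm, 'n) mcr \<Rightarrow> ('r, 's, 'm, 'n) mcr \<Rightarrow> ('r, 's, 'm, 'n) mcr" where
  "mc_mult C x y = (case x of (r, m, n, s) \<Rightarrow> case y of (r', m', n', s') \<Rightarrow>
      (r * r' + pf C m n', lM C r m' + rM C m s', rN C n r' + lN C s n', pg C n m' + s * s'))"

definition mc_one :: "('r::ring_1, 's::ring_1, 'm::ab_group_add, 'n::ab_group_add) mcr" where
  "mc_one = (1, 0, 0, 1)"

definition mc_zero :: "('r::ring_1, 's::ring_1, 'm::ab_group_add, 'n::ab_group_add) mcr" where
  "mc_zero = (0, 0, 0, 0)"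

definition mc_ring_iso ::
  "('r::ring_1, 's::ring_1, 'm::ab_group_add, 'n::ab_group_add) morita \<Rightarrow>
   ('r2::ring_1, 's2::ring_1, 'm2::ab_group_add, 'n2::ab_group_add) morita \<Rightarrow>
   (('r, 's, 'm, 'n) mcr \<Rightarrow> ('r2, 's2, 'm2, 'n2) mcr) \<Rightarrow> bool" where
  "mc_ring_iso C C' \<phi> \<longleftrightarrow> bij \<phi> \<and>
     (\<forall>x y. \<phi> (mc_add x y) = mc_add (\<phi> x) (\<phi> y)) \<and>
     (\<forall>x y. \<phi> (mc_mult C x y) = mc_mult C' (\<phi> x) (\<phi> y)) \<and>
     \<phi> mc_one = mc_one"

definition ring_iso :: "('a::ring_1 \<Rightarrow> 'b::ring_1) \<Rightarrow> bool" where
  "ring_iso h \<longleftrightarrow> bij h \<and> (\<forall>x y. h (x + y) = h x + h y) \<and>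
     (\<forall>x y. h (x * y) = h x * h y) \<and> h 1 = 1"

definition additive_bij :: "('a::ab_group_add \<Rightarrow> 'b::ab_group_add) \<Rightarrow> bool" where
  "additive_bij h \<longleftrightarrow> bij h \<and> (\<forall>x y. h (x + y) = h x + h y)"

definition indecomposable :: "'a::ring_1 itself \<Rightarrow> bool" where
  "indecomposable _ \<longleftrightarrow>
     (\<forall>e::'a. e * e = e \<and> (\<forall>x. e * x = x * e) \<longrightarrow> e = 0 \<or> e = 1)"

definition mc_comp :: "int \<Rightarrow> ('r::ring_1, 's::ring_1, 'm::ab_group_add, 'n::ab_group_add) mcr set" where
  "mc_comp i =
     (if i = -1 then {(0, 0, n, 0) | n. True}
      else if i = 0 then {(r, 0, 0, s) | r s. True}
      else if i = 1 then {(0, m, 0, 0) | m. True}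
      else {mc_zero})"

definition mc_graded :: "(('r::ring_1, 's::ring_1, 'm::ab_group_add, 'n::ab_group_add) mcr \<Rightarrow>
    ('r2::ring_1, 's2::ring_1, 'm2::ab_group_add, 'n2::ab_group_add) mcr) \<Rightarrow> bool" where
  "mc_graded \<phi> \<longleftrightarrow> (\<forall>i::int. \<phi> ` mc_comp i \<subseteq> mc_comp i)"

definition mc_antigraded :: "(('r::ring_1, 's::ring_1, 'm::ab_group_add, 'n::ab_group_add) mcr \<Rightarrow>
    ('r2::ring_1, 's2::ring_1, 'm2::ab_group_add, 'n2::ab_group_add) mcr) \<Rightarrow> bool" where
  "mc_antigraded \<phi> \<longleftrightarrow> (\<forall>i::int. \<phi> ` mc_comp i \<subseteq> mc_comp (- i))"

definition mc_semigraded :: "(('r::ring_1, 's::ring_1, 'm::ab_group_add, 'n::ab_group_add) mcr \<Rightarrow>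
    ('r2::ring_1, 's2::ring_1, 'm2::ab_group_add, 'n2::ab_group_add) mcr) \<Rightarrow> bool" where
  "mc_semigraded \<phi> \<longleftrightarrow> (\<forall>i::int. i \<in> {-1, 1} \<longrightarrow> \<phi> ` mc_comp i \<subseteq> mc_comp i)"

definition mc_antisemigraded :: "(('r::ring_1, 's::ring_1, 'm::ab_group_add, 'n::ab_group_add) mcr \<Rightarrow>
    ('r2::ring_1, 's2::ring_1, 'm2::ab_group_add, 'n2::ab_group_add) mcr) \<Rightarrow> bool" where
  "mc_antisemigraded \<phi> \<longleftrightarrow> (\<forall>i::int. i \<in> {-1, 1} \<longrightarrow> \<phi> ` mc_comp i \<subseteq> mc_comp (- i))"

definition Iso_g ::
  "('r::ring_1, 's::ring_1, 'm::ab_group_add, 'n::ab_group_add) morita \<Rightarrow>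
   ('r2::ring_1, 's2::ring_1, 'm2::ab_group_add, 'n2::ab_group_add) morita \<Rightarrow>
   (('r, 's, 'm, 'n) mcr \<Rightarrow> ('r2, 's2, 'm2, 'n2) mcr) set" where
  "Iso_g C C' = {\<phi>. mc_ring_iso C C' \<phi> \<and> (mc_graded \<phi> \<or> mc_antigraded \<phi>)}"

definition Iso_00 ::
  "('r::ring_1, 's::ring_1, 'm::ab_group_add, 'n::ab_group_add) morita \<Rightarrow>
   ('r2::ring_1, 's2::ring_1, 'm2::ab_group_add, 'n2::ab_group_add) morita \<Rightarrow>
   (('r, 's, 'm, 'n) mcr \<Rightarrow> ('r2, 's2, 'm2, 'n2) mcr) set" where
  "Iso_00 C C' = {\<phi>. \<exists>(\<gamma>::'r \<Rightarrow> 'r2) (\<delta>::'s \<Rightarrow> 's2) (u::'m \<Rightarrow> 'm2) (v::'n \<Rightarrow> 'n2) m0 n0.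
      ring_iso \<gamma> \<and> ring_iso \<delta> \<and> additive_bij u \<and> additive_bij v \<and>
      (\<forall>r m s. u (rM C (lM C r m) s) = rM C' (lM C' (\<gamma> r) (u m)) (\<delta> s)) \<and>
      (\<forall>s n r. v (rN C (lN C s n) r) = rN C' (lN C' (\<delta> s) (v n)) (\<gamma> r)) \<and>
      (\<forall>n'. pf C' m0 n' = 0) \<and> (\<forall>n'. pg C' n' m0 = 0) \<and>
      (\<forall>m'. pf C' m' n0 = 0) \<and> (\<forall>m'. pg C' n0 m' = 0) \<and>
      (\<forall>m n. pf C' (u m) (v n) = \<gamma> (pf C m n)) \<and>
      (\<forall>m n. pg C' (v n) (u m) = \<delta> (pg C n m)) \<and>
      \<phi> = (\<lambda>(r, m, n, s). (\<gamma> r,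
              lM C' (\<gamma> r) m0 - rM C' m0 (\<delta> s) + u m,
              rN C' n0 (\<gamma> r) - lN C' (\<delta> s) n0 + v n,
              \<delta> s))}"

definition Iso_01 ::
  "('r::ring_1, 's::ring_1, 'm::ab_group_add, 'n::ab_group_add) morita \<Rightarrow>
   ('r2::ring_1, 's2::ring_1, 'm2::ab_group_add, 'n2::ab_group_add) morita \<Rightarrow>
   (('r, 's, 'm, 'n) mcr \<Rightarrow> ('r2, 's2, 'm2, 'n2) mcr) set" where
  "Iso_01 C C' = {\<psi>. \<exists>(\<rho>::'r \<Rightarrow> 's2) (\<sigma>::'s \<Rightarrow> 'r2) (\<mu>::'m \<Rightarrow> 'n2) (\<nu>::'n \<Rightarrow> 'm2) m0 n0.
      ring_iso \<rho> \<and> ring_iso \<sigma> \<and> additive_bij \<mu> \<and> additive_bij \<nu> \<and>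
      (\<forall>r m s. \<mu> (rM C (lM C r m) s) = rN C' (lN C' (\<rho> r) (\<mu> m)) (\<sigma> s)) \<and>
      (\<forall>s n r. \<nu> (rN C (lN C s n) r) = rM C' (lM C' (\<sigma> s) (\<nu> n)) (\<rho> r)) \<and>
      (\<forall>n'. pf C' m0 n' = 0) \<and> (\<forall>n'. pg C' n' m0 = 0) \<and>
      (\<forall>m'. pf C' m' n0 = 0) \<and> (\<forall>m'. pg C' n0 m' = 0) \<and>
      (\<forall>m n. pg C' (\<mu> m) (\<nu> n) = \<rho> (pf C m n)) \<and>
      (\<forall>m n. pf C' (\<nu> n) (\<mu> m) = \<sigma> (pg C n m)) \<and>
      \<psi> = (\<lambda>(r, m, n, s). (\<sigma> s,
              rM C' m0 (\<rho> r) - lM C' (\<sigma> s) m0 + \<nu> n,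
              lN C' (\<rho> r) n0 - rN C' n0 (\<sigma> s) + \<mu> m,
              \<rho> r))}"

definition Iso_0 ::
  "('r::ring_1, 's::ring_1, 'm::ab_group_add, 'n::ab_group_add) morita \<Rightarrow>
   ('r2::ring_1, 's2::ring_1, 'm2::ab_group_add, 'n2::ab_group_add) morita \<Rightarrow>
   (('r, 's, 'm, 'n) mcr \<Rightarrow> ('r2, 's2, 'm2, 'n2) mcr) set" where
  "Iso_0 C C' = Iso_00 C C' \<union> Iso_01 C C'"

end

theory Submission imports Defs begin

lemma addh:
  fixes g :: "'a::ab_group_add \<Rightarrow> 'b::ab_group_add"
  assumes h: "\<And>x y. g (x+y) = g x + g y"
  shows "g 0 = 0" "g (-x) = - g x" "g (x - y) = g x - g y"
proof -
  have "g 0 = g (0+0)" by simp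
  also have "\<dots> = g 0 + g 0" by (rule h)
  finally show g0: "g 0 = 0" by simp
  have gn: "g (-z) = - g z" for z
  proof -
    have "g (-z) + g z = 0" using h[of "-z" z] g0 by simp
    then show ?thesis by (simp add: eq_neg_iff_add_eq_0)
  qed
  then show "g (-x) = - g x" .
  show "g (x - y) = g x - g y" using h[of x "-y"] gn[of y] by simp
qed

locale mc =
  fixes C :: "('r::ring_1, 's::ring_1, 'm::ab_group_add, 'n::ab_group_add) morita"
  assumes mc: "morita_context C"
begin

lemma bm: "bimodule (lM C) (rM C)" "bimodule (lN C) (rN C)"
  using mc unfolding morita_context_def by auto

lemma lM_add[simp]: "lM C a (m + m') = lM C a m + lM C a m'"
  and lM_add2[simp]: "lM C (a + b) m = lM C a m + lM C b m"
  and lM_mult[simp]: "lM C (a * b) m = lM C a (lM C b m)"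
  and lM_1[simp]: "lM C 1 m = m"
  and rM_add[simp]: "rM C (m + m') s = rM C m s + rM C m' s"
  and rM_add2[simp]: "rM C m (s + t) = rM C m s + rM C m t"
  and rM_mult[simp]: "rM C m (s * t) = rM C (rM C m s) t"
  and rM_1[simp]: "rM C m 1 = m"
  and rM_lM[simp]: "rM C (lM C a m) s = lM C a (rM C m s)"
  using bm(1) unfolding bimodule_def by auto

lemma lN_add[simp]: "lN C a (m + m') = lN C a m + lN C a m'"
  and lN_add2[simp]: "lN C (a + b) m = lN C a m + lN C b m"
  and lN_mult[simp]: "lN C (a * b) m = lN C a (lN C b m)"
  and lN_1[simp]: "lN C 1 m = m"
  and rN_add[simp]: "rN C (m + m') s = rN C m s + rN C m' s"
  and rN_add2[simp]: "rN C m (s + t) = rN C m s + rN C m t"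
  and rN_mult[simp]: "rN C m (s * t) = rN C (rN C m s) t"
  and rN_1[simp]: "rN C m 1 = m"
  and rN_lN[simp]: "rN C (lN C a m) s = lN C a (rN C m s)"
  using bm(2) unfolding bimodule_def by auto

lemma pf_add[simp]: "pf C (m + m') n = pf C m n + pf C m' n"
  and pf_add2[simp]: "pf C m (n + n') = pf C m n + pf C m n'"
  and pf_rM[simp]: "pf C (rM C m s) n = pf C m (lN C s n)"
  and pf_lM[simp]: "pf C (lM C a m) n = a * pf C m n"
  and pf_rN[simp]: "pf C m (rN C n a) = pf C m n * a"
  and pg_add[simp]: "pg C (n + n') m = pg C n m + pg C n' m"
  and pg_add2[simp]: "pg C n (m + m') = pg C n m + pg C n m'"
  and pg_rN[simp]: "pg C (rN C n a) m = pg C n (lM C a m)"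
  and pg_lN[simp]: "pg C (lN C s n) m = s * pg C n m"
  and pg_rM[simp]: "pg C n (rM C m s) = pg C n m * s"
  and lM_pf[simp]: "lM C (pf C m n) m' = rM C m (pg C n m')"
  and rN_pf[simp]: "rN C n (pf C m n') = lN C (pg C n m) n'"
  using mc unfolding morita_context_def by auto

lemmas lM_z[simp] = addh[of "lM C a" for a, OF lM_add]
lemmas lM_z2[simp] = addh[of "\<lambda>a. lM C a m" for m, OF lM_add2]
lemmas rM_z[simp] = addh[of "\<lambda>m. rM C m s" for s, OF rM_add]
lemmas rM_z2[simp] = addh[of "rM C m" for m, OF rM_add2]
lemmas lN_z[simp] = addh[of "lN C a" for a, OF lN_add]
lemmas lN_z2[simp] = addh[of "\<lambda>a. lN C a m" for m, OF lN_add2]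
lemmas rN_z[simp] = addh[of "\<lambda>m. rN C m s" for s, OF rN_add]
lemmas rN_z2[simp] = addh[of "rN C m" for m, OF rN_add2]
lemmas pf_z[simp] = addh[of "\<lambda>m. pf C m n" for n, OF pf_add]
lemmas pf_z2[simp] = addh[of "pf C m" for m, OF pf_add2]
lemmas pg_z[simp] = addh[of "\<lambda>m. pg C m n" for n, OF pg_add]
lemmas pg_z2[simp] = addh[of "pg C m" for m, OF pg_add2]

end


definition phi00 where
  "phi00 C' \<gamma> \<delta> u v m0 n0 = (\<lambda>(r, m, n, s). (\<gamma> r,
              lM C' (\<gamma> r) m0 - rM C' m0 (\<delta> s) + u m,
              rN C' n0 (\<gamma> r) - lN C' (\<delta> s) n0 + v n,
              \<delta> s))"

definition data00 where
  "data00 C C' \<gamma> \<delta> u v m0 n0 \<longleftrightarrow>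
      ring_iso \<gamma> \<and> ring_iso \<delta> \<and> additive_bij u \<and> additive_bij v \<and>
      (\<forall>r m s. u (rM C (lM C r m) s) = rM C' (lM C' (\<gamma> r) (u m)) (\<delta> s)) \<and>
      (\<forall>s n r. v (rN C (lN C s n) r) = rN C' (lN C' (\<delta> s) (v n)) (\<gamma> r)) \<and>
      (\<forall>n'. pf C' m0 n' = 0) \<and> (\<forall>n'. pg C' n' m0 = 0) \<and>
      (\<forall>m'. pf C' m' n0 = 0) \<and> (\<forall>m'. pg C' n0 m' = 0) \<and>
      (\<forall>m n. pf C' (u m) (v n) = \<gamma> (pf C m n)) \<and>
      (\<forall>m n. pg C' (v n) (u m) = \<delta> (pg C n m))"

lemma Iso_00_alt: "Iso_00 C C' = {\<phi>. \<exists>\<gamma> \<delta> u v m0 n0. data00 C C' \<gamma> \<delta> u v m0 n0 \<and> \<phi> = phi00 C' \<gamma> \<delta> u v m0 n0}"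
  unfolding Iso_00_def data00_def phi00_def by blast

lemma ring_iso_simps:
  assumes "ring_iso h"
  shows "h (x + y) = h x + h y" "h (x * y) = h x * h y" "h 1 = 1" "h 0 = 0" "h (-x) = - h x"
    "h (x - y) = h x - h y" "h x = h y \<longleftrightarrow> x = y" "h (inv h z) = z" "h x = 0 \<longleftrightarrow> x = 0"
proof -
  have a: "\<And>x y. h (x + y) = h x + h y" and b: "bij h" using assms unfolding ring_iso_def by auto
  show "h (x + y) = h x + h y" by (rule a)
  show "h (x * y) = h x * h y" "h 1 = 1" using assms unfolding ring_iso_def by auto
  show h0: "h 0 = 0" "h (-x) = - h x" "h (x - y) = h x - h y" using addh[of h, OF a] by auto
  show "h x = h y \<longleftrightarrow> x = y" using b by (auto simp: bij_def inj_eq)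
  show "h (inv h z) = z" using b by (simp add: bij_is_surj surj_f_inv_f)
  show "h x = 0 \<longleftrightarrow> x = 0" using b h0(1) by (metis bij_def inj_eq)
qed

lemma add_bij_simps:
  assumes "additive_bij h"
  shows "h (x + y) = h x + h y" "h 0 = 0" "h (-x) = - h x"
    "h (x - y) = h x - h y" "h x = h y \<longleftrightarrow> x = y" "h (inv h z) = z" "h x = 0 \<longleftrightarrow> x = 0"
proof -
  have a: "\<And>x y. h (x + y) = h x + h y" and b: "bij h" using assms unfolding additive_bij_def by auto
  show "h (x + y) = h x + h y" by (rule a)
  show h0: "h 0 = 0" "h (-x) = - h x" "h (x - y) = h x - h y" using addh[of h, OF a] by auto
  show "h x = h y \<longleftrightarrow> x = y" using b by (auto simp: bij_def inj_eq)
  show "h (inv h z) = z" using b by (simp add: bij_is_surj surj_f_inv_f)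
  show "h x = 0 \<longleftrightarrow> x = 0" using b h0(1) by (metis bij_def inj_eq)
qed

lemma mc_comp_simps:
  "x \<in> mc_comp 1 \<longleftrightarrow> (\<exists>m. x = (0, m, 0, 0))"
  "x \<in> mc_comp (-1) \<longleftrightarrow> (\<exists>n. x = (0, 0, n, 0))"
  by (auto simp: mc_comp_def)

lemma iso00_iso:
  fixes C :: "('r::ring_1, 's::ring_1, 'm::ab_group_add, 'n::ab_group_add) morita"
    and C' :: "('r2::ring_1, 's2::ring_1, 'm2::ab_group_add, 'n2::ab_group_add) morita"
  assumes mC: "morita_context C" and mC': "morita_context C'"
    and D: "data00 C C' \<gamma> \<delta> u v m0 n0"
  shows "mc_ring_iso C C' (phi00 C' \<gamma> \<delta> u v m0 n0) \<and> mc_semigraded (phi00 C' \<gamma> \<delta> u v m0 n0)"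
proof -
  interpret A: mc C by (rule mc.intro) (rule mC)
  interpret B: mc C' by (rule mc.intro) (rule mC')
  have g: "ring_iso \<gamma>" and d: "ring_iso \<delta>" and u: "additive_bij u" and v: "additive_bij v"
    and um: "\<And>r m s. u (rM C (lM C r m) s) = rM C' (lM C' (\<gamma> r) (u m)) (\<delta> s)"
    and vn: "\<And>s n r. v (rN C (lN C s n) r) = rN C' (lN C' (\<delta> s) (v n)) (\<gamma> r)"
    and z1[simp]: "\<And>n'. pf C' m0 n' = 0" and z2[simp]: "\<And>n'. pg C' n' m0 = 0"
    and z3[simp]: "\<And>m'. pf C' m' n0 = 0" and z4[simp]: "\<And>m'. pg C' n0 m' = 0"
    and p1: "\<And>m n. pf C' (u m) (v n) = \<gamma> (pf C m n)"
    and p2: "\<And>m n. pg C' (v n) (u m) = \<delta> (pg C n m)"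
    using D unfolding data00_def by auto
  note gs[simp] = ring_iso_simps[OF g] and ds[simp] = ring_iso_simps[OF d]
    and us[simp] = add_bij_simps[OF u] and vs[simp] = add_bij_simps[OF v]
  have uL[simp]: "u (lM C r m) = lM C' (\<gamma> r) (u m)" for r m using um[of r m 1] by simp
  have uR[simp]: "u (rM C m s) = rM C' (u m) (\<delta> s)" for s m using um[of 1 m s] by simp
  have vL[simp]: "v (lN C s n) = lN C' (\<delta> s) (v n)" for s n using vn[of s n 1] by simp
  have vR[simp]: "v (rN C n r) = rN C' (v n) (\<gamma> r)" for r n using vn[of 1 n r] by simp
  have p1'[simp]: "\<gamma> (pf C m n) = pf C' (u m) (v n)" for m n using p1 by simp
  have p2'[simp]: "\<delta> (pg C n m) = pg C' (v n) (u m)" for m n using p2 by simp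
  have y1[simp]: "pf C' m (lN C' s n0) = 0" for m s using B.pf_rM[of m s n0] by simp
  have y2[simp]: "pg C' n (lM C' a m0) = 0" for n a using B.pg_rN[of n a m0] by simp
  have y3[simp]: "rM C' m0 (pg C' n m) = 0" for n m using B.lM_pf[of m0 n m] by simp
  have y4[simp]: "lN C' (pg C' n m) n0 = 0" for n m using B.rN_pf[of n m n0] by simp
  let ?p = "phi00 C' \<gamma> \<delta> u v m0 n0"
  have add: "?p (mc_add x y) = mc_add (?p x) (?p y)" for x y
    by (cases x; cases y) (simp add: phi00_def mc_add_def algebra_simps)
  have mul: "?p (mc_mult C x y) = mc_mult C' (?p x) (?p y)" for x y
    by (cases x; cases y) (simp add: phi00_def mc_mult_def algebra_simps)
  have one: "?p mc_one = mc_one"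
    by (simp add: phi00_def mc_one_def)
  have inj: "inj ?p"
  proof (rule injI)
    fix x y assume "?p x = ?p y"
    then show "x = y"
      by (cases x; cases y) (auto simp: phi00_def)
  qed
  have surj: "surj ?p"
    unfolding surj_def
  proof
    fix y :: "('r2, 's2, 'm2, 'n2) mcr"
    obtain R M N S where y: "y = (R, M, N, S)" by (cases y) auto
    have "?p (inv \<gamma> R, inv u (M - lM C' R m0 + rM C' m0 S), inv v (N - rN C' n0 R + lN C' S n0), inv \<delta> S) = y"
      by (simp add: y phi00_def)
    then show "\<exists>x. y = ?p x" by metis
  qed
  have sg: "mc_semigraded ?p"
    unfolding mc_semigraded_def
    by (auto simp: mc_comp_def phi00_def)
  show ?thesis using add mul one inj surj sg unfolding mc_ring_iso_def bij_def by auto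
qed


lemma hard:
  fixes C :: "('r::ring_1, 's::ring_1, 'm::ab_group_add, 'n::ab_group_add) morita"
    and C' :: "('r2::ring_1, 's2::ring_1, 'm2::ab_group_add, 'n2::ab_group_add) morita"
  assumes mC: "morita_context C" and mC': "morita_context C'"
    and ind1: "indecomposable TYPE('r2)" and ind2: "indecomposable TYPE('s2)"
    and nz: "(\<exists>m::'m2. m \<noteq> 0) \<or> (\<exists>n::'n2. n \<noteq> 0)"
    and iso: "mc_ring_iso C C' \<phi>" and sg: "mc_semigraded \<phi>"
  shows "\<exists>\<gamma> \<delta> u v m0 n0. data00 C C' \<gamma> \<delta> u v m0 n0 \<and> \<phi> = phi00 C' \<gamma> \<delta> u v m0 n0"
proof -
  interpret A: mc C by (rule mc.intro) (rule mC)
  interpret B: mc C' by (rule mc.intro) (rule mC')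
  have bij: "bij \<phi>" and add: "\<And>x y. \<phi> (mc_add x y) = mc_add (\<phi> x) (\<phi> y)"
    and mul: "\<And>x y. \<phi> (mc_mult C x y) = mc_mult C' (\<phi> x) (\<phi> y)"
    and one: "\<phi> mc_one = mc_one" using iso unfolding mc_ring_iso_def by auto
  have injp: "\<phi> p = \<phi> q \<longleftrightarrow> p = q" for p q using bij by (auto simp: bij_def inj_eq)
  have surjp: "\<exists>p. t = \<phi> p" for t using bij by (metis bij_is_surj surjD)
  have T1: "\<exists>m'. \<phi> (0, m, 0, 0) = (0, m', 0, 0)" for m
  proof -
    have "(0, m, 0, 0) \<in> mc_comp 1" by (simp add: mc_comp_simps)
    then have "\<phi> (0, m, 0, 0) \<in> mc_comp 1" using sg unfolding mc_semigraded_def by blast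
    then show ?thesis by (simp add: mc_comp_simps)
  qed
  have Tm1: "\<exists>n'. \<phi> (0, 0, n, 0) = (0, 0, n', 0)" for n
  proof -
    have "(0, 0, n, 0) \<in> mc_comp (-1)" by (simp add: mc_comp_simps)
    then have "\<phi> (0, 0, n, 0) \<in> mc_comp (-1)" using sg unfolding mc_semigraded_def by blast
    then show ?thesis by (simp add: mc_comp_simps)
  qed
  have Z: "\<phi> (0, 0, 0, 0) = (0, 0, 0, 0)"
  proof -
    obtain a x y b where z: "\<phi> (0, 0, 0, 0) = (a, x, y, b)" by (cases "\<phi> (0, 0, 0, 0)") auto
    have "\<phi> (mc_add (0, 0, 0, 0) (0, 0, 0, 0)) = \<phi> (0, 0, 0, 0)" by (simp add: mc_add_def)
    then show ?thesis using add[of "(0, 0, 0, 0)" "(0, 0, 0, 0)"] z by (simp add: mc_add_def)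
  qed
  obtain a x y b where e: "\<phi> (1, 0, 0, 0) = (a, x, y, b)" by (cases "\<phi> (1, 0, 0, 0)") auto
  have f: "\<phi> (0, 0, 0, 1) = (1 - a, - x, - y, 1 - b)"
  proof -
    obtain a' x' y' b' where f: "\<phi> (0, 0, 0, 1) = (a', x', y', b')" by (cases "\<phi> (0, 0, 0, 1)") auto
    have "\<phi> (mc_add (1, 0, 0, 0) (0, 0, 0, 1)) = mc_one" using one by (simp add: mc_add_def mc_one_def)
    then have "(a + a', x + x', y + y', b + b') = (1, 0, 0, 1)"
      using add[of "(1, 0, 0, 0)" "(0, 0, 0, 1)"] e f by (simp add: mc_add_def mc_one_def)
    then show ?thesis using f by (auto simp: algebra_simps eq_neg_iff_add_eq_0 add.commute)
  qed
  have K1: "mc_mult C' (mc_mult C' (a, x, y, b) t) (1 - a, - x, - y, 1 - b) \<in> mc_comp 1" for t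
  proof -
    obtain r m n s where t: "t = \<phi> (r, m, n, s)" using surjp[of t] by (metis prod_cases4)
    have "mc_mult C (mc_mult C (1, 0, 0, 0) (r, m, n, s)) (0, 0, 0, 1) = (0, m, 0, 0)"
      by (simp add: mc_mult_def)
    then have "\<phi> (mc_mult C (mc_mult C (1, 0, 0, 0) (r, m, n, s)) (0, 0, 0, 1)) \<in> mc_comp 1"
      using T1[of m] by (auto simp: mc_comp_simps)
    then show ?thesis using mul e f t by simp
  qed
  have K2: "mc_mult C' (mc_mult C' (1 - a, - x, - y, 1 - b) t) (a, x, y, b) \<in> mc_comp (-1)" for t
  proof -
    obtain r m n s where t: "t = \<phi> (r, m, n, s)" using surjp[of t] by (metis prod_cases4)
    have "mc_mult C (mc_mult C (0, 0, 0, 1) (r, m, n, s)) (1, 0, 0, 0) = (0, 0, n, 0)"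
      by (simp add: mc_mult_def)
    then have "\<phi> (mc_mult C (mc_mult C (0, 0, 0, 1) (r, m, n, s)) (1, 0, 0, 0)) \<in> mc_comp (-1)"
      using Tm1[of n] by (auto simp: mc_comp_simps)
    then show ?thesis using mul e f t by simp
  qed
  have a1: "a * r * (1 - a) = 0 \<and> (1 - a) * r * a = 0" for r :: 'r2
    using K1[of "(r,0,0,0)"] K2[of "(r,0,0,0)"] by (simp add: mc_mult_def mc_comp_simps)
  have ac: "a * r = r * a" for r
  proof -
    have "a * r * (1 - a) = a * r - a * r * a" "(1 - a) * r * a = r * a - a * r * a"
      by (simp_all add: algebra_simps)
    then show ?thesis using a1[of r] by simp
  qed
  have aa: "a * a = a" using a1[of 1] by (simp add: algebra_simps)
  have a01: "a = 0 \<or> a = 1" using ind1 ac aa unfolding indecomposable_def by blast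
  have b1: "b * r * (1 - b) = 0 \<and> (1 - b) * r * b = 0" for r :: 's2
    using K1[of "(0,0,0,r)"] K2[of "(0,0,0,r)"] by (simp add: mc_mult_def mc_comp_simps)
  have bc: "b * r = r * b" for r
  proof -
    have "b * r * (1 - b) = b * r - b * r * b" "(1 - b) * r * b = r * b - b * r * b"
      by (simp_all add: algebra_simps)
    then show ?thesis using b1[of r] by simp
  qed
  have bb: "b * b = b" using b1[of 1] by (simp add: algebra_simps)
  have b01: "b = 0 \<or> b = 1" using ind2 bc bb unfolding indecomposable_def by blast
  have ee: "mc_mult C' (a, x, y, b) (a, x, y, b) = (a, x, y, b)"
    using mul[of "(1,0,0,0)" "(1,0,0,0)"] e by (simp add: mc_mult_def)
  have ff: "mc_mult C' (1 - a, - x, - y, 1 - b) (1 - a, - x, - y, 1 - b) = (1 - a, - x, - y, 1 - b)"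
    using mul[of "(0,0,0,1)" "(0,0,0,1)"] f by (simp add: mc_mult_def)
  have e0: "(a, x, y, b) \<noteq> (0, 0, 0, 0)"
  proof
    assume "(a, x, y, b) = (0, 0, 0, 0)"
    then have "\<phi> (1, 0, 0, 0) = \<phi> (0, 0, 0, 0)" using e Z by simp
    then show False by (simp add: injp)
  qed
  have f0: "(1 - a, - x, - y, 1 - b) \<noteq> (0, 0, 0, 0)"
  proof
    assume "(1 - a, - x, - y, 1 - b) = (0, 0, 0, 0)"
    then have "\<phi> (0, 0, 0, 1) = \<phi> (0, 0, 0, 0)" using f Z by simp
    then show False by (simp add: injp)
  qed
  have not00: "\<not> (a = 0 \<and> b = 0)"
  proof
    assume ab: "a = 0 \<and> b = 0"
    then show False using ee e0 by (simp add: mc_mult_def)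
  qed
  have not11: "\<not> (a = 1 \<and> b = 1)"
  proof
    assume ab: "a = 1 \<and> b = 1"
    then show False using ff f0 by (simp add: mc_mult_def)
  qed
  have not01: "\<not> (a = 0 \<and> b = 1)"
  proof
    assume ab: "a = 0 \<and> b = 1"
    have "m = 0" for m :: 'm2 using K2[of "(0,m,0,0)"] ab by (simp add: mc_mult_def mc_comp_simps)
    moreover have "n = 0" for n :: 'n2 using K1[of "(0,0,n,0)"] ab by (simp add: mc_mult_def mc_comp_simps)
    ultimately show False using nz by auto
  qed
  have ab: "a = 1" "b = 0" using a01 b01 not00 not11 not01 by auto
  have e1: "\<phi> (1, 0, 0, 0) = (1, x, y, 0)" using e ab by simp
  have f1: "\<phi> (0, 0, 0, 1) = (0, - x, - y, 1)" using f ab by simp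
  have zx: "pf C' x n = 0 \<and> pg C' n x = 0" for n
    using K2[of "(0,0,n,0)"] ab by (simp add: mc_mult_def mc_comp_simps)
  have zy: "pf C' m y = 0 \<and> pg C' y m = 0" for m
    using K1[of "(0,m,0,0)"] ab by (simp add: mc_mult_def mc_comp_simps)
  have z1[simp]: "pf C' x n = 0" "pg C' n x = 0" "pf C' m y = 0" "pg C' y m = 0" for n m
    using zx zy by auto
  have y1[simp]: "pf C' m (lN C' s y) = 0" for m s using B.pf_rM[of m s y] by simp
  have y2[simp]: "pg C' n (lM C' a x) = 0" for n a using B.pg_rN[of n a x] by simp
  have y3[simp]: "rM C' x (pg C' n m) = 0" for n m using B.lM_pf[of x n m] by simp
  have y4[simp]: "lN C' (pg C' n m) y = 0" for n m using B.rN_pf[of n m y] by simp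
  define \<gamma> where "\<gamma> r = fst (\<phi> (r, 0, 0, 0))" for r
  define \<delta> where "\<delta> s = snd (snd (snd (\<phi> (0, 0, 0, s))))" for s
  define u where "u m = fst (snd (\<phi> (0, m, 0, 0)))" for m
  define v where "v n = fst (snd (snd (\<phi> (0, 0, n, 0))))" for n
  have Fr: "\<phi> (r, 0, 0, 0) = (\<gamma> r, lM C' (\<gamma> r) x, rN C' y (\<gamma> r), 0)" for r
  proof -
    obtain \<alpha> \<beta> \<eta> \<zeta> where h: "\<phi> (r, 0, 0, 0) = (\<alpha>, \<beta>, \<eta>, \<zeta>)" by (cases "\<phi> (r, 0, 0, 0)") auto
    have "\<phi> (mc_mult C (r,0,0,0) (1,0,0,0)) = mc_mult C' (\<phi> (r,0,0,0)) (\<phi> (1,0,0,0))" by (rule mul)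
    moreover have "mc_mult C (r,0,0,0) (1,0,0,0) = (r,0,0,0)" by (simp add: mc_mult_def)
    ultimately have h1: "(\<alpha>, \<beta>, \<eta>, \<zeta>) = mc_mult C' (\<alpha>, \<beta>, \<eta>, \<zeta>) (1, x, y, 0)" using h e1 by simp
    have "\<phi> (mc_mult C (1,0,0,0) (r,0,0,0)) = mc_mult C' (\<phi> (1,0,0,0)) (\<phi> (r,0,0,0))" by (rule mul)
    moreover have "mc_mult C (1,0,0,0) (r,0,0,0) = (r,0,0,0)" by (simp add: mc_mult_def)
    ultimately have h2: "(\<alpha>, \<beta>, \<eta>, \<zeta>) = mc_mult C' (1, x, y, 0) (\<alpha>, \<beta>, \<eta>, \<zeta>)" using h e1 by simp
    have "\<beta> = lM C' \<alpha> x" "\<zeta> = 0" using h1 by (simp_all add: mc_mult_def)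
    moreover have "\<eta> = rN C' y \<alpha>" using h2 by (simp add: mc_mult_def)
    ultimately show ?thesis using h by (simp add: \<gamma>_def)
  qed
  have Fs: "\<phi> (0, 0, 0, s) = (0, - rM C' x (\<delta> s), - lN C' (\<delta> s) y, \<delta> s)" for s
  proof -
    obtain \<alpha> \<beta> \<eta> \<zeta> where h: "\<phi> (0, 0, 0, s) = (\<alpha>, \<beta>, \<eta>, \<zeta>)" by (cases "\<phi> (0, 0, 0, s)") auto
    have "\<phi> (mc_mult C (0,0,0,s) (0,0,0,1)) = mc_mult C' (\<phi> (0,0,0,s)) (\<phi> (0,0,0,1))" by (rule mul)
    moreover have "mc_mult C (0,0,0,s) (0,0,0,1) = (0,0,0,s)" by (simp add: mc_mult_def)
    ultimately have h1: "(\<alpha>, \<beta>, \<eta>, \<zeta>) = mc_mult C' (\<alpha>, \<beta>, \<eta>, \<zeta>) (0, - x, - y, 1)" using h f1 by simp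
    have "\<phi> (mc_mult C (0,0,0,1) (0,0,0,s)) = mc_mult C' (\<phi> (0,0,0,1)) (\<phi> (0,0,0,s))" by (rule mul)
    moreover have "mc_mult C (0,0,0,1) (0,0,0,s) = (0,0,0,s)" by (simp add: mc_mult_def)
    ultimately have h2: "(\<alpha>, \<beta>, \<eta>, \<zeta>) = mc_mult C' (0, - x, - y, 1) (\<alpha>, \<beta>, \<eta>, \<zeta>)" using h f1 by simp
    have "\<alpha> = 0" "\<eta> = - lN C' \<zeta> y" using h1 by (simp_all add: mc_mult_def)
    moreover have "\<beta> = - rM C' x \<zeta>" using h2 by (simp add: mc_mult_def)
    ultimately show ?thesis using h by (simp add: \<delta>_def)
  qed
  have Fm: "\<phi> (0, m, 0, 0) = (0, u m, 0, 0)" for m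
    using T1[of m] by (auto simp: u_def)
  have Fn: "\<phi> (0, 0, n, 0) = (0, 0, v n, 0)" for n
    using Tm1[of n] by (auto simp: v_def)
  have Fall: "\<phi> p = phi00 C' \<gamma> \<delta> u v x y p" for p
  proof -
    obtain r m n s where p: "p = (r, m, n, s)" by (cases p) auto
    have "p = mc_add (mc_add (r,0,0,0) (0,m,0,0)) (mc_add (0,0,n,0) (0,0,0,s))"
      by (simp add: p mc_add_def)
    then have "\<phi> p = mc_add (mc_add (\<phi> (r,0,0,0)) (\<phi> (0,m,0,0))) (mc_add (\<phi> (0,0,n,0)) (\<phi> (0,0,0,s)))"
      by (simp add: add)
    then show ?thesis by (simp add: Fr Fs Fm Fn p phi00_def mc_add_def)
  qed
  have phi: "\<phi> = phi00 C' \<gamma> \<delta> u v x y" using Fall by (rule ext)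
  have g: "ring_iso \<gamma>"
    unfolding ring_iso_def bij_def
  proof (intro conjI allI)
    show "inj \<gamma>"
    proof (rule injI)
      fix r r' assume "\<gamma> r = \<gamma> r'"
      then have "\<phi> (r, 0, 0, 0) = \<phi> (r', 0, 0, 0)" by (simp add: Fr)
      then show "r = r'" by (simp add: injp)
    qed
    show "surj \<gamma>" unfolding surj_def
    proof
      fix R
      obtain p where "(R, 0, 0, 0) = \<phi> p" using surjp by blast
      then have "R = \<gamma> (fst p)" by (cases p) (simp add: phi00_def Fall)
      then show "\<exists>r. R = \<gamma> r" by blast
    qed
    fix r r'
    have "\<phi> (mc_add (r,0,0,0) (r',0,0,0)) = mc_add (\<phi> (r,0,0,0)) (\<phi> (r',0,0,0))" by (rule add)
    then show "\<gamma> (r + r') = \<gamma> r + \<gamma> r'" by (simp add: mc_add_def Fr)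
    have "\<phi> (mc_mult C (r,0,0,0) (r',0,0,0)) = mc_mult C' (\<phi> (r,0,0,0)) (\<phi> (r',0,0,0))" by (rule mul)
    then show "\<gamma> (r * r') = \<gamma> r * \<gamma> r'" by (simp add: mc_mult_def Fr)
  next
    show "\<gamma> 1 = 1" using e1 by (simp add: \<gamma>_def)
  qed
  have d: "ring_iso \<delta>"
    unfolding ring_iso_def bij_def
  proof (intro conjI allI)
    show "inj \<delta>"
    proof (rule injI)
      fix r r' assume "\<delta> r = \<delta> r'"
      then have "\<phi> (0, 0, 0, r) = \<phi> (0, 0, 0, r')" by (simp add: Fs)
      then show "r = r'" by (simp add: injp)
    qed
    show "surj \<delta>" unfolding surj_def
    proof
      fix R
      obtain p where "(0, 0, 0, R) = \<phi> p" using surjp by blast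
      then have "R = \<delta> (snd (snd (snd p)))" by (cases p) (simp add: phi00_def Fall)
      then show "\<exists>r. R = \<delta> r" by blast
    qed
    fix r r'
    have "\<phi> (mc_add (0,0,0,r) (0,0,0,r')) = mc_add (\<phi> (0,0,0,r)) (\<phi> (0,0,0,r'))" by (rule add)
    then show "\<delta> (r + r') = \<delta> r + \<delta> r'" by (simp add: mc_add_def Fs)
    have "\<phi> (mc_mult C (0,0,0,r) (0,0,0,r')) = mc_mult C' (\<phi> (0,0,0,r)) (\<phi> (0,0,0,r'))" by (rule mul)
    then show "\<delta> (r * r') = \<delta> r * \<delta> r'" by (simp add: mc_mult_def Fs)
  next
    show "\<delta> 1 = 1" using f1 by (simp add: \<delta>_def)
  qed
  note gs[simp] = ring_iso_simps[OF g] and ds[simp] = ring_iso_simps[OF d]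
  have uu: "additive_bij u"
    unfolding additive_bij_def bij_def
  proof (intro conjI allI)
    show "inj u"
    proof (rule injI)
      fix r r' assume "u r = u r'"
      then have "\<phi> (0, r, 0, 0) = \<phi> (0, r', 0, 0)" by (simp add: Fm)
      then show "r = r'" by (simp add: injp)
    qed
    show "surj u" unfolding surj_def
    proof
      fix R
      obtain p where "(0, R, 0, 0) = \<phi> p" using surjp by blast
      then have "R = u (fst (snd p))" by (cases p) (simp add: phi00_def Fall)
      then show "\<exists>r. R = u r" by blast
    qed
    fix r r'
    have "\<phi> (mc_add (0,r,0,0) (0,r',0,0)) = mc_add (\<phi> (0,r,0,0)) (\<phi> (0,r',0,0))" by (rule add)
    then show "u (r + r') = u r + u r'" by (simp add: mc_add_def Fm)
  qed
  have vv: "additive_bij v"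
    unfolding additive_bij_def bij_def
  proof (intro conjI allI)
    show "inj v"
    proof (rule injI)
      fix r r' assume "v r = v r'"
      then have "\<phi> (0, 0, r, 0) = \<phi> (0, 0, r', 0)" by (simp add: Fn)
      then show "r = r'" by (simp add: injp)
    qed
    show "surj v" unfolding surj_def
    proof
      fix R
      obtain p where "(0, 0, R, 0) = \<phi> p" using surjp by blast
      then have "R = v (fst (snd (snd p)))" by (cases p) (simp add: phi00_def Fall)
      then show "\<exists>r. R = v r" by blast
    qed
    fix r r'
    have "\<phi> (mc_add (0,0,r,0) (0,0,r',0)) = mc_add (\<phi> (0,0,r,0)) (\<phi> (0,0,r',0))" by (rule add)
    then show "v (r + r') = v r + v r'" by (simp add: mc_add_def Fn)
  qed
  have um: "u (rM C (lM C r m) s) = rM C' (lM C' (\<gamma> r) (u m)) (\<delta> s)" for r m s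
  proof -
    have "\<phi> (mc_mult C (mc_mult C (r,0,0,0) (0,m,0,0)) (0,0,0,s)) =
      mc_mult C' (mc_mult C' (\<phi> (r,0,0,0)) (\<phi> (0,m,0,0))) (\<phi> (0,0,0,s))" by (simp add: mul)
    then show ?thesis by (simp add: mc_mult_def Fr Fs Fm)
  qed
  have vn: "v (rN C (lN C s n) r) = rN C' (lN C' (\<delta> s) (v n)) (\<gamma> r)" for r n s
  proof -
    have "\<phi> (mc_mult C (mc_mult C (0,0,0,s) (0,0,n,0)) (r,0,0,0)) =
      mc_mult C' (mc_mult C' (\<phi> (0,0,0,s)) (\<phi> (0,0,n,0))) (\<phi> (r,0,0,0))" by (simp add: mul)
    then show ?thesis by (simp add: mc_mult_def Fr Fs Fn)
  qed
  have p1: "pf C' (u m) (v n) = \<gamma> (pf C m n)" for m n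
  proof -
    have "\<phi> (mc_mult C (0,m,0,0) (0,0,n,0)) = mc_mult C' (\<phi> (0,m,0,0)) (\<phi> (0,0,n,0))" by (rule mul)
    then show ?thesis by (simp add: mc_mult_def Fr Fm Fn)
  qed
  have p2: "pg C' (v n) (u m) = \<delta> (pg C n m)" for m n
  proof -
    have "\<phi> (mc_mult C (0,0,n,0) (0,m,0,0)) = mc_mult C' (\<phi> (0,0,n,0)) (\<phi> (0,m,0,0))" by (rule mul)
    then show ?thesis by (simp add: mc_mult_def Fs Fm Fn)
  qed
  have "data00 C C' \<gamma> \<delta> u v x y"
    unfolding data00_def using g d uu vv um vn p1 p2 by simp
  then show ?thesis using phi by blast
qed


lemma iso00_char:
  fixes C :: "('r::ring_1, 's::ring_1, 'm::ab_group_add, 'n::ab_group_add) morita"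
    and C' :: "('r2::ring_1, 's2::ring_1, 'm2::ab_group_add, 'n2::ab_group_add) morita"
  assumes mC: "morita_context C" and mC': "morita_context C'"
    and ind1: "indecomposable TYPE('r2)" and ind2: "indecomposable TYPE('s2)"
    and nz: "(\<exists>m::'m2. m \<noteq> 0) \<or> (\<exists>n::'n2. n \<noteq> 0)"
  shows "Iso_00 C C' = {\<phi>. mc_ring_iso C C' \<phi> \<and> mc_semigraded \<phi>}"
proof
  show "Iso_00 C C' \<subseteq> {\<phi>. mc_ring_iso C C' \<phi> \<and> mc_semigraded \<phi>}"
    using iso00_iso[OF mC mC'] unfolding Iso_00_alt by blast
  show "{\<phi>. mc_ring_iso C C' \<phi> \<and> mc_semigraded \<phi>} \<subseteq> Iso_00 C C'"
    using hard[OF mC mC' ind1 ind2 nz] unfolding Iso_00_alt by blast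
qed

definition flip :: "('r, 's, 'm, 'n) morita \<Rightarrow> ('s, 'r, 'n, 'm) morita" where
  "flip C = \<lparr>lM = lN C, rM = rN C, lN = lM C, rN = rM C, pf = pg C, pg = pf C\<rparr>"

definition tau :: "('r, 's, 'm, 'n) mcr \<Rightarrow> ('s, 'r, 'n, 'm) mcr" where
  "tau = (\<lambda>(r, m, n, s). (s, n, m, r))"

lemma tau_tau[simp]: "tau (tau p) = p"
  by (cases p) (simp add: tau_def)

lemma flip_simps[simp]: "lM (flip C) = lN C" "rM (flip C) = rN C" "lN (flip C) = lM C"
  "rN (flip C) = rM C" "pf (flip C) = pg C" "pg (flip C) = pf C"
  by (simp_all add: flip_def)

lemma flip_mc: "morita_context C \<Longrightarrow> morita_context (flip C)"
  unfolding morita_context_def by simp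

lemma tau_add: "tau (mc_add p q) = mc_add (tau p) (tau q)"
  by (cases p; cases q) (simp add: tau_def mc_add_def)

lemma tau_mult: "tau (mc_mult C p q) = mc_mult (flip C) (tau p) (tau q)"
  by (cases p; cases q) (simp add: tau_def mc_mult_def add.commute)

lemma tau_one: "tau mc_one = mc_one"
  by (simp add: tau_def mc_one_def)

lemma bij_tau: "bij tau"
  by (metis bij_betw_byWitness tau_tau top_greatest subsetI image_iff UNIV_I)

lemma tau_ring_iso: "mc_ring_iso C (flip C') (tau \<circ> \<psi>) \<longleftrightarrow> mc_ring_iso C C' \<psi>"
proof -
  have "bij (tau \<circ> \<psi>) \<longleftrightarrow> bij \<psi>"
  proof
    assume "bij (tau \<circ> \<psi>)"
    then have "bij (tau \<circ> (tau \<circ> \<psi>))" using bij_tau bij_comp by blast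
    moreover have "tau \<circ> (tau \<circ> \<psi>) = \<psi>" by (rule ext) simp
    ultimately show "bij \<psi>" by simp
  qed (use bij_tau bij_comp in blast)
  moreover have "(\<forall>x y. (tau \<circ> \<psi>) (mc_add x y) = mc_add ((tau \<circ> \<psi>) x) ((tau \<circ> \<psi>) y)) \<longleftrightarrow>
      (\<forall>x y. \<psi> (mc_add x y) = mc_add (\<psi> x) (\<psi> y))"
    by (metis comp_apply tau_add tau_tau)
  moreover have "(\<forall>x y. (tau \<circ> \<psi>) (mc_mult C x y) = mc_mult (flip C') ((tau \<circ> \<psi>) x) ((tau \<circ> \<psi>) y)) \<longleftrightarrow>
      (\<forall>x y. \<psi> (mc_mult C x y) = mc_mult C' (\<psi> x) (\<psi> y))"
    by (metis comp_apply tau_mult tau_tau)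
  moreover have "(tau \<circ> \<psi>) mc_one = mc_one \<longleftrightarrow> \<psi> mc_one = mc_one"
    by (metis comp_apply tau_one tau_tau)
  ultimately show ?thesis unfolding mc_ring_iso_def by blast
qed

lemma tau_comp: "tau ` mc_comp i = mc_comp (- i)"
  by (auto simp: mc_comp_def tau_def mc_zero_def image_iff)

lemma tau_semigraded: "mc_semigraded (tau \<circ> \<psi>) \<longleftrightarrow> mc_antisemigraded \<psi>"
proof -
  have "(tau \<circ> \<psi>) ` A \<subseteq> mc_comp i \<longleftrightarrow> \<psi> ` A \<subseteq> mc_comp (- i)" for A i
  proof
    assume "(tau \<circ> \<psi>) ` A \<subseteq> mc_comp i"
    then have "tau ` ((tau \<circ> \<psi>) ` A) \<subseteq> tau ` mc_comp i" by blast
    moreover have "tau ` ((tau \<circ> \<psi>) ` A) = \<psi> ` A" by (force simp: image_iff)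
    ultimately show "\<psi> ` A \<subseteq> mc_comp (- i)" by (simp add: tau_comp)
  next
    assume "\<psi> ` A \<subseteq> mc_comp (- i)"
    then have "tau ` (\<psi> ` A) \<subseteq> tau ` mc_comp (- i)" by blast
    then show "(tau \<circ> \<psi>) ` A \<subseteq> mc_comp i" by (simp add: tau_comp image_comp)
  qed
  then show ?thesis unfolding mc_semigraded_def mc_antisemigraded_def by auto
qed

definition psi01 where
  "psi01 C' \<rho> \<sigma> \<mu> \<nu> m0 n0 = (\<lambda>(r, m, n, s). (\<sigma> s,
              rM C' m0 (\<rho> r) - lM C' (\<sigma> s) m0 + \<nu> n,
              lN C' (\<rho> r) n0 - rN C' n0 (\<sigma> s) + \<mu> m,
              \<rho> r))"

lemma Iso_01_alt: "Iso_01 C C' = {\<psi>. \<exists>\<rho> \<sigma> \<mu> \<nu> m0 n0. data00 C (flip C') \<rho> \<sigma> \<mu> \<nu> n0 m0 \<and> \<psi> = psi01 C' \<rho> \<sigma> \<mu> \<nu> m0 n0}"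
  unfolding Iso_01_def data00_def psi01_def flip_simps by blast

lemma tau_psi: "tau \<circ> phi00 (flip C') \<rho> \<sigma> \<mu> \<nu> n0 m0 = psi01 C' \<rho> \<sigma> \<mu> \<nu> m0 n0"
  by (rule ext) (auto simp: tau_def phi00_def psi01_def)

lemma tau_Iso01: "\<psi> \<in> Iso_01 C C' \<longleftrightarrow> tau \<circ> \<psi> \<in> Iso_00 C (flip C')"
proof -
  have eq: "\<psi> = psi01 C' \<rho> \<sigma> \<mu> \<nu> m0 n0 \<longleftrightarrow> tau \<circ> \<psi> = phi00 (flip C') \<rho> \<sigma> \<mu> \<nu> n0 m0"
    for \<rho> \<sigma> \<mu> \<nu> m0 n0
  proof
    assume "\<psi> = psi01 C' \<rho> \<sigma> \<mu> \<nu> m0 n0"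
    then have "tau \<circ> \<psi> = tau \<circ> (tau \<circ> phi00 (flip C') \<rho> \<sigma> \<mu> \<nu> n0 m0)" by (simp add: tau_psi)
    then show "tau \<circ> \<psi> = phi00 (flip C') \<rho> \<sigma> \<mu> \<nu> n0 m0" by (simp add: comp_def)
  next
    assume "tau \<circ> \<psi> = phi00 (flip C') \<rho> \<sigma> \<mu> \<nu> n0 m0"
    then have "tau \<circ> (tau \<circ> \<psi>) = psi01 C' \<rho> \<sigma> \<mu> \<nu> m0 n0" by (simp add: tau_psi)
    then show "\<psi> = psi01 C' \<rho> \<sigma> \<mu> \<nu> m0 n0" by (simp add: comp_def)
  qed
  show ?thesis unfolding Iso_01_alt Iso_00_alt mem_Collect_eq eq by blast
qed

theorem theorem3p6:
  fixes C :: "('r::ring_1, 's::ring_1, 'm::ab_group_add, 'n::ab_group_add) morita"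
    and C' :: "('r2::ring_1, 's2::ring_1, 'm2::ab_group_add, 'n2::ab_group_add) morita"
  assumes "morita_context C"
    and "morita_context C'"
    and "indecomposable TYPE('r2)"
    and "indecomposable TYPE('s2)"
    and "(\<exists>m::'m2. m \<noteq> 0) \<or> (\<exists>n::'n2. n \<noteq> 0)"
  shows "Iso_00 C C' = {\<phi>. mc_ring_iso C C' \<phi> \<and> mc_semigraded \<phi>} \<and>
         Iso_01 C C' = {\<phi>. mc_ring_iso C C' \<phi> \<and> mc_antisemigraded \<phi>} \<and>
         Iso_g C C' \<subseteq> Iso_0 C C'"
proof -
  have P1: "Iso_00 C C' = {\<phi>. mc_ring_iso C C' \<phi> \<and> mc_semigraded \<phi>}"
    using iso00_char assms by blast
  have F: "Iso_00 C (flip C') = {\<phi>. mc_ring_iso C (flip C') \<phi> \<and> mc_semigraded \<phi>}"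
    using iso00_char[OF assms(1) flip_mc[OF assms(2)] assms(4) assms(3)] assms(5) by blast
  have P2: "Iso_01 C C' = {\<phi>. mc_ring_iso C C' \<phi> \<and> mc_antisemigraded \<phi>}"
    using F by (auto simp: tau_Iso01 tau_ring_iso tau_semigraded)
  have "Iso_g C C' \<subseteq> Iso_0 C C'"
    unfolding Iso_g_def Iso_0_def P1 P2 mc_graded_def mc_antigraded_def mc_semigraded_def mc_antisemigraded_def
    by blast
  with P1 P2 show ?thesis by blast
qed

end
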